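(* Let $X$ be a 1-reduced simplicial set, let $Q$ be a monoidal cubical set with multiplication written $(a,b)\mapsto a\cdot b$, and let $\tau=\{\tau_n:X_n\to Q_{n-1}\}_{n\ge 1}$ be a sequence of functions of degree $-1$. Let $f:{\bf \Omega}X\to Q$ be the monoidal map determined on words by $f(\bar x_1\cdots\bar x_k)=\tau(x_1)\cdots\tau(x_k)$. Then $\tau$ is a truncating twisting function if and only if $f$ is a map of cubical sets.
   Context: A simplicial set $X=\{X_n,\partial_i,s_i\}$ is 1-reduced if $X_0=X_1=\{*\}$. A cubical set $Q=\{Q_n\}_{n\ge0}$ has face operators $d_i^\epsilon:Q_n\to Q_{n-1}$ ($\epsilon=0,1$, $1\le i\le n$) and degeneracies $\eta_i:Q_n\to Q_{n+1}$ ($1\le i\le n+1$) satisfying the standard cubical identities. The product $Q\times Q'$ of cubical sets is $\bigcup_{p+q=n}Q_p\times Q'_q$ modulo $(\eta_{p+1}(a),b)\sim(a,\eta_1(b))$ with the obvious face and degeneracy operators; a monoidal cubical set is a cubical set $Q$ with an associative cubical map $Q\times Q\to Q$ having a unit $e\in Q_0$. A truncating twisting function is a sequence $\tau_n:X_n\to Q_{n-1}$, $n\ge1$, with: $\tau(x)=e$ for $x\in X_1$; $d_i^0\tau(x)=\tau(\partial_{i+1}\cdots\partial_n x)\cdot\tau(\partial_0\cdots\partial_{i-1}x)$ and $d_i^1\tau(x)=\tau(\partial_i x)$ for $1\le i\le n-1$, $x\in X_n$; and $\eta_n\tau(x)=\tau(s_n x)$ for $x\in X_n$. The monoidal cubical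 set ${\bf\Omega}X$: let $X^c$ be the graded set of formal expressions $\eta_{i_k}\cdots\eta_{i_1}(x)$, $x\in X_n$, $i_1\le\dots\le i_k$, $1\le i_j\le n+j-1$ (of degree $n+k$), containing $X$ ($k=0$). Let $\bar x$ denote the desuspension of $x\in X^c_{>0}$ (degree lowered by one). Let ${\bf\Omega}''X$ be the free graded monoid (without unit) on the $\bar x$, $x\in X^c_{>0}$, and ${\bf\Omega}'X$ its quotient by $\overline{\eta_{p+1}(x)}\cdot\bar y\sim\bar x\cdot\overline{\eta_1(y)}$ for $x\in X_{p+1}$, $y\in X$. For $x\in X_n$ set $d_i^0(\bar x)=\overline{\partial_{i+1}\cdots\partial_n x}\cdot\overline{\partial_0\cdots\partial_{i-1}x}$ and $d_i^1(\bar x)=\overline{\partial_i x}$, $1\le i\le n-1$, and $\eta_i(\bar x)=\overline{\eta_i(x)}$ (normalized). On a word $\bar x_1\cdots\bar x_k$ with $|\bar x_j|=m_j$, $m_{(q)}=m_1+\dots+m_q$, these operators act for $m_{(q-1)}<i\le m_{(q)}$ by applying the operator with index $i-m_{(q-1)}$ to the letter $\bar x_q$; the top degeneracy $\eta_n$ of a word of degree $n-1$ applies $\eta_{m_k+1}$ to the last letter; face operators are extended to degenerate elements so that the cubical identities hold. Finally ${\bf\Omega}X$ is the quotient of ${\bf\Omega}'X$ by $e\,a\sim a\,e\sim a$ where $e=\overline{s_0( * )}$, and $\eta_n(\bar x)\sim\overline{s_n(x)}$ for $x\in X_n$, $n>0$. It is a monoidal cubical set with unit $e$. *)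

theory Defs
  imports Main
begin

text \<open>A simplicial set is a graded set: a carrier together with a dimension function;
  X_n is the set of elements of the carrier of dimension n.\<close>

record 'x sset =
  sc    :: "'x set"
  sdim  :: "'x \<Rightarrow> nat"
  sface :: "nat \<Rightarrow> 'x \<Rightarrow> 'x"
  sdeg  :: "nat \<Rightarrow> 'x \<Rightarrow> 'x"

definition simplicial_set :: "'x sset \<Rightarrow> bool" where
  "simplicial_set X \<longleftrightarrow>
     (\<forall>x\<in>sc X. \<forall>i. 0 < sdim X x \<and> i \<le> sdim X x \<longrightarrow>
         sface X i x \<in> sc X \<and> sdim X (sface X i x) = sdim X x - 1) \<and>
     (\<forall>x\<in>sc X. \<forall>i. i \<le> sdim X x \<longrightarrow>
         sdeg X i x \<in> sc X \<and> sdim X (sdeg X i x) = sdim X x + 1) \<and>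
     (\<forall>x\<in>sc X. \<forall>i j. i < j \<and> j \<le> sdim X x \<and> 2 \<le> sdim X x \<longrightarrow>
         sface X i (sface X j x) = sface X (j - 1) (sface X i x)) \<and>
     (\<forall>x\<in>sc X. \<forall>i j. i \<le> j \<and> j \<le> sdim X x \<longrightarrow>
         sdeg X i (sdeg X j x) = sdeg X (Suc j) (sdeg X i x)) \<and>
     (\<forall>x\<in>sc X. \<forall>i j. i < j \<and> j \<le> sdim X x \<longrightarrow>
         sface X i (sdeg X j x) = sdeg X (j - 1) (sface X i x)) \<and>
     (\<forall>x\<in>sc X. \<forall>j. j \<le> sdim X x \<longrightarrow>
         sface X j (sdeg X j x) = x \<and> sface X (Suc j) (sdeg X j x) = x) \<and>
     (\<forall>x\<in>sc X. \<forall>i j. Suc j < i \<and> i \<le> Suc (sdim X x) \<longrightarrow>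
         sface X i (sdeg X j x) = sdeg X j (sface X (i - 1) x))"

definition one_reduced :: "'x sset \<Rightarrow> bool" where
  "one_reduced X \<longleftrightarrow>
     (\<exists>a. {x\<in>sc X. sdim X x = 0} = {a}) \<and> (\<exists>b. {x\<in>sc X. sdim X x = 1} = {b})"

definition base_pt :: "'x sset \<Rightarrow> 'x" where
  "base_pt X = (THE a. a \<in> sc X \<and> sdim X a = 0)"

text \<open>back_faces X i x = \<partial>_{i+1} ... \<partial>_n x   (x in X_n; \<partial>_n applied first)\<close>
definition back_faces :: "'x sset \<Rightarrow> nat \<Rightarrow> 'x \<Rightarrow> 'x" where
  "back_faces X i x = foldr (sface X) [Suc i..<Suc (sdim X x)] x"

text \<open>front_faces X i x = \<partial>_0 ... \<partial>_{i-1} x   (\<partial>_{i-1} applied first)\<close>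
definition front_faces :: "'x sset \<Rightarrow> nat \<Rightarrow> 'x \<Rightarrow> 'x" where
  "front_faces X i x = foldr (sface X) [0..<i] x"

text \<open>Graded carrier; faces d_i^eps (eps = False for 0, True for 1), 1 <= i <= n,
  and degeneracies eta_i, 1 <= i <= n+1, on Q_n.\<close>

record 'q cset =
  cc    :: "'q set"
  cdim  :: "'q \<Rightarrow> nat"
  cface :: "nat \<Rightarrow> bool \<Rightarrow> 'q \<Rightarrow> 'q"
  cdeg  :: "nat \<Rightarrow> 'q \<Rightarrow> 'q"

record 'q mcset = "'q cset" +
  cmult :: "'q \<Rightarrow> 'q \<Rightarrow> 'q"
  cunit :: "'q"

definition cubical_set :: "('q, 'z) cset_scheme \<Rightarrow> bool" where
  "cubical_set Q \<longleftrightarrow>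
     (\<forall>a\<in>cc Q. \<forall>i \<epsilon>. 1 \<le> i \<and> i \<le> cdim Q a \<longrightarrow>
         cface Q i \<epsilon> a \<in> cc Q \<and> cdim Q (cface Q i \<epsilon> a) = cdim Q a - 1) \<and>
     (\<forall>a\<in>cc Q. \<forall>i. 1 \<le> i \<and> i \<le> Suc (cdim Q a) \<longrightarrow>
         cdeg Q i a \<in> cc Q \<and> cdim Q (cdeg Q i a) = Suc (cdim Q a)) \<and>
     (\<forall>a\<in>cc Q. \<forall>i j \<epsilon> \<omega>. 1 \<le> i \<and> i < j \<and> j \<le> cdim Q a \<longrightarrow>
         cface Q i \<epsilon> (cface Q j \<omega> a) = cface Q (j - 1) \<omega> (cface Q i \<epsilon> a)) \<and>
     (\<forall>a\<in>cc Q. \<forall>i j. 1 \<le> i \<and> i \<le> j \<and> j \<le> Suc (cdim Q a) \<longrightarrow>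
         cdeg Q i (cdeg Q j a) = cdeg Q (Suc j) (cdeg Q i a)) \<and>
     (\<forall>a\<in>cc Q. \<forall>i j \<epsilon>. 1 \<le> i \<and> i < j \<and> j \<le> Suc (cdim Q a) \<longrightarrow>
         cface Q i \<epsilon> (cdeg Q j a) = cdeg Q (j - 1) (cface Q i \<epsilon> a)) \<and>
     (\<forall>a\<in>cc Q. \<forall>j \<epsilon>. 1 \<le> j \<and> j \<le> Suc (cdim Q a) \<longrightarrow>
         cface Q j \<epsilon> (cdeg Q j a) = a) \<and>
     (\<forall>a\<in>cc Q. \<forall>i j \<epsilon>. 1 \<le> j \<and> j < i \<and> i \<le> Suc (cdim Q a) \<longrightarrow>
         cface Q i \<epsilon> (cdeg Q j a) = cdeg Q j (cface Q (i - 1) \<epsilon> a))"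

text \<open>Monoidal cubical set: an associative unital multiplication Q x Q -> Q which is a
  cubical map from the product cubical set (faces/degeneracies of (a,b) with a in Q_p act on a
  for indices <= p (resp. <= p+1) and on b with shifted index otherwise; the identification
  (eta_{p+1} a, b) ~ (a, eta_1 b) is then respected automatically).\<close>

definition monoidal_cubical_set :: "'q mcset \<Rightarrow> bool" where
  "monoidal_cubical_set Q \<longleftrightarrow> cubical_set Q \<and>
     cunit Q \<in> cc Q \<and> cdim Q (cunit Q) = 0 \<and>
     (\<forall>a\<in>cc Q. \<forall>b\<in>cc Q. cmult Q a b \<in> cc Q \<and> cdim Q (cmult Q a b) = cdim Q a + cdim Q b) \<and>
     (\<forall>a\<in>cc Q. \<forall>b\<in>cc Q. \<forall>c\<in>cc Q. cmult Q (cmult Q a b) c = cmult Q a (cmult Q b c)) \<and>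
     (\<forall>a\<in>cc Q. cmult Q (cunit Q) a = a \<and> cmult Q a (cunit Q) = a) \<and>
     (\<forall>a\<in>cc Q. \<forall>b\<in>cc Q. \<forall>i \<epsilon>. 1 \<le> i \<and> i \<le> cdim Q a \<longrightarrow>
         cmult Q (cface Q i \<epsilon> a) b = cface Q i \<epsilon> (cmult Q a b)) \<and>
     (\<forall>a\<in>cc Q. \<forall>b\<in>cc Q. \<forall>i \<epsilon>. 1 \<le> i \<and> i \<le> cdim Q b \<longrightarrow>
         cmult Q a (cface Q i \<epsilon> b) = cface Q (cdim Q a + i) \<epsilon> (cmult Q a b)) \<and>
     (\<forall>a\<in>cc Q. \<forall>b\<in>cc Q. \<forall>i. 1 \<le> i \<and> i \<le> Suc (cdim Q a) \<longrightarrow>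
         cmult Q (cdeg Q i a) b = cdeg Q i (cmult Q a b)) \<and>
     (\<forall>a\<in>cc Q. \<forall>b\<in>cc Q. \<forall>i. 1 \<le> i \<and> i \<le> Suc (cdim Q b) \<longrightarrow>
         cmult Q a (cdeg Q i b) = cdeg Q (cdim Q a + i) (cmult Q a b))"

definition truncating_twisting ::
  "'x sset \<Rightarrow> 'q mcset \<Rightarrow> ('x \<Rightarrow> 'q) \<Rightarrow> bool" where
  "truncating_twisting X Q \<tau> \<longleftrightarrow>
     (\<forall>x\<in>sc X. sdim X x = 1 \<longrightarrow> \<tau> x = cunit Q) \<and>
     (\<forall>x\<in>sc X. \<forall>i. 1 \<le> i \<and> i \<le> sdim X x - 1 \<longrightarrow>
         cface Q i False (\<tau> x) = cmult Q (\<tau> (back_faces X i x)) (\<tau> (front_faces X i x))) \<and>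
     (\<forall>x\<in>sc X. \<forall>i. 1 \<le> i \<and> i \<le> sdim X x - 1 \<longrightarrow>
         cface Q i True (\<tau> x) = \<tau> (sface X i x)) \<and>
     (\<forall>x\<in>sc X. 1 \<le> sdim X x \<longrightarrow> cdeg Q (sdim X x) (\<tau> x) = \<tau> (sdeg X (sdim X x) x))"

section \<open>The monoidal cubical set Omega X, via representatives\<close>

text \<open>A letter (x, is) stands for the desuspension of the formal degenerate expression
  eta_{i_k} ... eta_{i_1}(x), where is = [i_k, ..., i_1] (outermost degeneracy first).
  A word is a nonempty list of letters (element of the free monoid Omega''X).\<close>

type_synonym 'x letter = "'x \<times> nat list"
type_synonym 'x word = "'x letter list"

text \<open>Apply the formal degeneracy eta_j to a normalized index list and renormalize using
  eta_i eta_j = eta_{j+1} eta_i (i <= j).\<close>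
fun ins_deg :: "nat \<Rightarrow> nat list \<Rightarrow> nat list" where
  "ins_deg j [] = [j]"
| "ins_deg j (i # is) = (if j \<le> i then Suc i # ins_deg j is else j # i # is)"

text \<open>Normalized formal degeneracy lists applicable to an element of X_n (the set X^c):
  generated from the empty list by admissible normalized degeneracies.\<close>
inductive normal_degs :: "nat \<Rightarrow> nat list \<Rightarrow> bool" for n :: nat where
  nd_nil: "normal_degs n []"
| nd_ins: "normal_degs n is \<Longrightarrow> 1 \<le> j \<Longrightarrow> j \<le> n + length is \<Longrightarrow> normal_degs n (ins_deg j is)"

definition valid_letter :: "'x sset \<Rightarrow> 'x letter \<Rightarrow> bool" where
  "valid_letter X l \<longleftrightarrow> fst l \<in> sc X \<and> 1 \<le> sdim X (fst l) \<and> normal_degs (sdim X (fst l)) (snd l)"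

definition valid_word :: "'x sset \<Rightarrow> 'x word \<Rightarrow> bool" where
  "valid_word X w \<longleftrightarrow> w \<noteq> [] \<and> (\<forall>l\<in>set w. valid_letter X l)"

definition ldim :: "'x sset \<Rightarrow> 'x letter \<Rightarrow> nat" where
  "ldim X l = sdim X (fst l) - 1 + length (snd l)"

definition wdim :: "'x sset \<Rightarrow> 'x word \<Rightarrow> nat" where
  "wdim X w = sum_list (map (ldim X) w)"

text \<open>Degeneracy eta_j on a word: it acts on the letter q with m_(q-1) < j <= m_(q)
  (index j - m_(q-1)); the top degeneracy acts on the last letter.\<close>
fun eta_word :: "'x sset \<Rightarrow> nat \<Rightarrow> 'x word \<Rightarrow> 'x word" where
  "eta_word X j [] = []"
| "eta_word X j [l] = [(fst l, ins_deg j (snd l))]"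
| "eta_word X j (l # l' # ls) =
     (if j \<le> ldim X l then (fst l, ins_deg j (snd l)) # l' # ls
      else l # eta_word X (j - ldim X l) (l' # ls))"

text \<open>Faces of a letter: on a nondegenerate letter by the defining formulas, on degenerate
  letters extended via the cubical identities.\<close>
fun face_letter :: "'x sset \<Rightarrow> nat \<Rightarrow> bool \<Rightarrow> 'x \<Rightarrow> nat list \<Rightarrow> 'x word" where
  "face_letter X i \<epsilon> x [] =
     (if \<epsilon> then [(sface X i x, [])]
      else [(back_faces X i x, []), (front_faces X i x, [])])"
| "face_letter X i \<epsilon> x (j # is) =
     (if i < j then eta_word X (j - 1) (face_letter X i \<epsilon> x is)
      else if i = j then [(x, is)]
      else eta_word X j (face_letter X (i - 1) \<epsilon> x is))"

fun face_word :: "'x sset \<Rightarrow> nat \<Rightarrow> bool \<Rightarrow> 'x word \<Rightarrow> 'x word" where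
  "face_word X i \<epsilon> [] = []"
| "face_word X i \<epsilon> (l # ls) =
     (if i \<le> ldim X l then face_letter X i \<epsilon> (fst l) (snd l) @ ls
      else l # face_word X (i - ldim X l) \<epsilon> ls)"

definition omega_unit :: "'x sset \<Rightarrow> 'x word" where
  "omega_unit X = [(sdeg X 0 (base_pt X), [])]"

text \<open>The equivalence relation on words defining Omega X = Omega''X / ~ : generated by the
  relations of Omega'X and Omega X, as a congruence for the multiplication (concatenation)
  and for the cubical operators.\<close>
inductive omega_rel :: "'x sset \<Rightarrow> 'x word \<Rightarrow> 'x word \<Rightarrow> bool" for X :: "'x sset" where
  om_refl: "valid_word X w \<Longrightarrow> omega_rel X w w"
| om_sym: "omega_rel X w v \<Longrightarrow> omega_rel X v w"
| om_trans: "omega_rel X u v \<Longrightarrow> omega_rel X v w \<Longrightarrow> omega_rel X u w"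
| om_shift: "x \<in> sc X \<Longrightarrow> 1 \<le> sdim X x \<Longrightarrow> y \<in> sc X \<Longrightarrow> 1 \<le> sdim X y \<Longrightarrow>
     omega_rel X [(x, [sdim X x]), (y, [])] [(x, []), (y, [1])]"
| om_unit_l: "valid_word X w \<Longrightarrow> omega_rel X (omega_unit X @ w) w"
| om_unit_r: "valid_word X w \<Longrightarrow> omega_rel X (w @ omega_unit X) w"
| om_top_deg: "x \<in> sc X \<Longrightarrow> 1 \<le> sdim X x \<Longrightarrow>
     omega_rel X [(x, [sdim X x])] [(sdeg X (sdim X x) x, [])]"
| om_mult: "omega_rel X w v \<Longrightarrow> \<forall>l\<in>set u. valid_letter X l \<Longrightarrow> \<forall>l\<in>set u'. valid_letter X l \<Longrightarrow>
     omega_rel X (u @ w @ u') (u @ v @ u')"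
| om_face: "omega_rel X w v \<Longrightarrow> 1 \<le> i \<Longrightarrow> i \<le> wdim X w \<Longrightarrow>
     omega_rel X (face_word X i \<epsilon> w) (face_word X i \<epsilon> v)"
| om_deg: "omega_rel X w v \<Longrightarrow> 1 \<le> j \<Longrightarrow> j \<le> Suc (wdim X w) \<Longrightarrow>
     omega_rel X (eta_word X j w) (eta_word X j v)"

definition f_letter :: "'q mcset \<Rightarrow> ('x \<Rightarrow> 'q) \<Rightarrow> 'x letter \<Rightarrow> 'q" where
  "f_letter Q \<tau> l = foldr (cdeg Q) (snd l) (\<tau> (fst l))"

fun f_word :: "'q mcset \<Rightarrow> ('x \<Rightarrow> 'q) \<Rightarrow> 'x word \<Rightarrow> 'q" where
  "f_word Q \<tau> [] = cunit Q"
| "f_word Q \<tau> [l] = f_letter Q \<tau> l"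
| "f_word Q \<tau> (l # l' # ls) = cmult Q (f_letter Q \<tau> l) (f_word Q \<tau> (l' # ls))"

text \<open>f is a (monoidal) map of cubical sets Omega X -> Q: it is well defined on the quotient
  Omega X, preserves the unit, and commutes with all faces and degeneracies (which on Omega X
  are induced from representatives).\<close>
definition omega_map_is_cubical :: "'x sset \<Rightarrow> 'q mcset \<Rightarrow> ('x \<Rightarrow> 'q) \<Rightarrow> bool" where
  "omega_map_is_cubical X Q \<tau> \<longleftrightarrow>
     (\<forall>w v. omega_rel X w v \<longrightarrow> f_word Q \<tau> w = f_word Q \<tau> v) \<and>
     f_word Q \<tau> (omega_unit X) = cunit Q \<and>
     (\<forall>w. valid_word X w \<longrightarrow>
        (\<forall>i \<epsilon>. 1 \<le> i \<and> i \<le> wdim X w \<longrightarrow>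
           f_word Q \<tau> (face_word X i \<epsilon> w) = cface Q i \<epsilon> (f_word Q \<tau> w)) \<and>
        (\<forall>j. 1 \<le> j \<and> j \<le> Suc (wdim X w) \<longrightarrow>
           f_word Q \<tau> (eta_word X j w) = cdeg Q j (f_word Q \<tau> w)))"

end

theory Submission
  imports Defs
begin


fun dok :: "nat \<Rightarrow> nat list \<Rightarrow> bool" where
  "dok n [] = True"
| "dok n (i # xs) = (1 \<le> i \<and> i \<le> n + length xs \<and> dok n xs)"

lemma length_ins_deg[simp]: "length (ins_deg j xs) = Suc (length xs)"
  by (induction xs) auto

lemma dok_ins: "dok n xs \<Longrightarrow> 1 \<le> j \<Longrightarrow> j \<le> n + length xs \<Longrightarrow> dok n (ins_deg j xs)"
  by (induction xs) auto

lemma normal_dok: "normal_degs n xs \<Longrightarrow> dok n xs"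
  by (induction rule: normal_degs.induct) (auto simp: dok_ins)

definition vl :: "'x sset \<Rightarrow> 'x letter \<Rightarrow> bool" where
  "vl X l \<longleftrightarrow> fst l \<in> sc X \<and> 1 \<le> sdim X (fst l) \<and> dok (sdim X (fst l)) (snd l)"

lemma valid_vl: "valid_letter X l \<Longrightarrow> vl X l"
  unfolding valid_letter_def vl_def using normal_dok by blast

lemma wdim_nil[simp]: "wdim X [] = 0" by (simp add: wdim_def)
lemma wdim_cons[simp]: "wdim X (l # w) = ldim X l + wdim X w" by (simp add: wdim_def)
lemma wdim_app[simp]: "wdim X (u @ w) = wdim X u + wdim X w" by (simp add: wdim_def)

locale ctx =
  fixes X :: "'x sset" and Q :: "'q mcset" and \<tau> :: "'x \<Rightarrow> 'q"
  assumes SS: "simplicial_set X" and MC: "monoidal_cubical_set Q"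
    and TY: "\<forall>x\<in>sc X. 1 \<le> sdim X x \<longrightarrow> \<tau> x \<in> cc Q \<and> cdim Q (\<tau> x) = sdim X x - 1"
begin

lemmas SSu = SS[unfolded simplicial_set_def]
lemmas MCu = MC[unfolded monoidal_cubical_set_def]
lemma CS: "cubical_set Q" using MCu[THEN conjunct1] .
lemmas CSu = CS[unfolded cubical_set_def]

lemma sface_in: "x \<in> sc X \<Longrightarrow> 0 < sdim X x \<Longrightarrow> i \<le> sdim X x \<Longrightarrow>
   sface X i x \<in> sc X \<and> sdim X (sface X i x) = sdim X x - 1"
  using SSu[THEN conjunct1] by blast
lemma sdeg_in: "x \<in> sc X \<Longrightarrow> i \<le> sdim X x \<Longrightarrow>
   sdeg X i x \<in> sc X \<and> sdim X (sdeg X i x) = sdim X x + 1"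
  using SSu[THEN conjunct2, THEN conjunct1] by blast
lemma cdeg_in: "a \<in> cc Q \<Longrightarrow> 1 \<le> i \<Longrightarrow> i \<le> Suc (cdim Q a) \<Longrightarrow>
   cdeg Q i a \<in> cc Q \<and> cdim Q (cdeg Q i a) = Suc (cdim Q a)"
  using CSu[THEN conjunct2, THEN conjunct1] by blast
lemma deg_deg: "a \<in> cc Q \<Longrightarrow> 1 \<le> i \<Longrightarrow> i \<le> j \<Longrightarrow> j \<le> Suc (cdim Q a) \<Longrightarrow>
   cdeg Q i (cdeg Q j a) = cdeg Q (Suc j) (cdeg Q i a)"
  using CSu[THEN conjunct2, THEN conjunct2, THEN conjunct2, THEN conjunct1] by blast
lemma face_deg_lt: "a \<in> cc Q \<Longrightarrow> 1 \<le> i \<Longrightarrow> i < j \<Longrightarrow> j \<le> Suc (cdim Q a) \<Longrightarrow>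
   cface Q i e (cdeg Q j a) = cdeg Q (j - 1) (cface Q i e a)"
  using CSu[THEN conjunct2, THEN conjunct2, THEN conjunct2, THEN conjunct2, THEN conjunct1] by blast
lemma face_deg_eq: "a \<in> cc Q \<Longrightarrow> 1 \<le> j \<Longrightarrow> j \<le> Suc (cdim Q a) \<Longrightarrow>
   cface Q j e (cdeg Q j a) = a"
  using CSu[THEN conjunct2, THEN conjunct2, THEN conjunct2, THEN conjunct2, THEN conjunct2, THEN conjunct1] by blast
lemma face_deg_gt: "a \<in> cc Q \<Longrightarrow> 1 \<le> j \<Longrightarrow> j < i \<Longrightarrow> i \<le> Suc (cdim Q a) \<Longrightarrow>
   cface Q i e (cdeg Q j a) = cdeg Q j (cface Q (i - 1) e a)"
  using CSu[THEN conjunct2, THEN conjunct2, THEN conjunct2, THEN conjunct2, THEN conjunct2, THEN conjunct2] by blast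
lemma unit_in: "cunit Q \<in> cc Q" "cdim Q (cunit Q) = 0"
  using MCu[THEN conjunct2, THEN conjunct1] MCu[THEN conjunct2, THEN conjunct2, THEN conjunct1] by blast+
lemma mult_in: "a \<in> cc Q \<Longrightarrow> b \<in> cc Q \<Longrightarrow> cmult Q a b \<in> cc Q \<and> cdim Q (cmult Q a b) = cdim Q a + cdim Q b"
  using MCu[THEN conjunct2, THEN conjunct2, THEN conjunct2, THEN conjunct1] by blast
lemma assoc: "a \<in> cc Q \<Longrightarrow> b \<in> cc Q \<Longrightarrow> c \<in> cc Q \<Longrightarrow> cmult Q (cmult Q a b) c = cmult Q a (cmult Q b c)"
  using MCu[THEN conjunct2, THEN conjunct2, THEN conjunct2, THEN conjunct2, THEN conjunct1] by blast
lemma unit_l: "a \<in> cc Q \<Longrightarrow> cmult Q (cunit Q) a = a"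
  using MCu[THEN conjunct2, THEN conjunct2, THEN conjunct2, THEN conjunct2, THEN conjunct2, THEN conjunct1] by blast
lemma unit_r: "a \<in> cc Q \<Longrightarrow> cmult Q a (cunit Q) = a"
  using MCu[THEN conjunct2, THEN conjunct2, THEN conjunct2, THEN conjunct2, THEN conjunct2, THEN conjunct1] by blast
lemma mult_face_l: "a \<in> cc Q \<Longrightarrow> b \<in> cc Q \<Longrightarrow> 1 \<le> i \<Longrightarrow> i \<le> cdim Q a \<Longrightarrow>
   cface Q i e (cmult Q a b) = cmult Q (cface Q i e a) b"
  using MCu[THEN conjunct2, THEN conjunct2, THEN conjunct2, THEN conjunct2, THEN conjunct2, THEN conjunct2, THEN conjunct1] by metis
lemma mult_face_r: "a \<in> cc Q \<Longrightarrow> b \<in> cc Q \<Longrightarrow> 1 \<le> i \<Longrightarrow> i \<le> cdim Q b \<Longrightarrow>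
   cface Q (cdim Q a + i) e (cmult Q a b) = cmult Q a (cface Q i e b)"
  using MCu[THEN conjunct2, THEN conjunct2, THEN conjunct2, THEN conjunct2, THEN conjunct2, THEN conjunct2, THEN conjunct2, THEN conjunct1] by metis
lemma mult_deg_l: "a \<in> cc Q \<Longrightarrow> b \<in> cc Q \<Longrightarrow> 1 \<le> i \<Longrightarrow> i \<le> Suc (cdim Q a) \<Longrightarrow>
   cdeg Q i (cmult Q a b) = cmult Q (cdeg Q i a) b"
  using MCu[THEN conjunct2, THEN conjunct2, THEN conjunct2, THEN conjunct2, THEN conjunct2, THEN conjunct2, THEN conjunct2, THEN conjunct2, THEN conjunct1] by metis
lemma mult_deg_r: "a \<in> cc Q \<Longrightarrow> b \<in> cc Q \<Longrightarrow> 1 \<le> i \<Longrightarrow> i \<le> Suc (cdim Q b) \<Longrightarrow>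
   cdeg Q (cdim Q a + i) (cmult Q a b) = cmult Q a (cdeg Q i b)"
  using MCu[THEN conjunct2, THEN conjunct2, THEN conjunct2, THEN conjunct2, THEN conjunct2, THEN conjunct2, THEN conjunct2, THEN conjunct2, THEN conjunct2] by metis

lemma fold_in: "x \<in> sc X \<Longrightarrow> 1 \<le> sdim X x \<Longrightarrow> dok (sdim X x) xs \<Longrightarrow>
   foldr (cdeg Q) xs (\<tau> x) \<in> cc Q \<and> cdim Q (foldr (cdeg Q) xs (\<tau> x)) = sdim X x - 1 + length xs"
proof (induction xs)
  case Nil then show ?case using TY by auto
next
  case (Cons i xs) then show ?case using cdeg_in[of "foldr (cdeg Q) xs (\<tau> x)" i] by auto
qed

lemma fold_ins: "x \<in> sc X \<Longrightarrow> 1 \<le> sdim X x \<Longrightarrow> dok (sdim X x) xs \<Longrightarrow> 1 \<le> j \<Longrightarrow> j \<le> sdim X x + length xs \<Longrightarrow>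
   foldr (cdeg Q) (ins_deg j xs) (\<tau> x) = cdeg Q j (foldr (cdeg Q) xs (\<tau> x))"
proof (induction xs)
  case Nil then show ?case by simp
next
  case (Cons i xs)
  have a: "foldr (cdeg Q) xs (\<tau> x) \<in> cc Q \<and> cdim Q (foldr (cdeg Q) xs (\<tau> x)) = sdim X x - 1 + length xs"
    using fold_in Cons.prems by auto
  show ?case
  proof (cases "j \<le> i")
    case True
    then show ?thesis using Cons a deg_deg[of "foldr (cdeg Q) xs (\<tau> x)" j i] by auto
  qed simp
qed

lemma f_letter_in: "vl X l \<Longrightarrow> f_letter Q \<tau> l \<in> cc Q \<and> cdim Q (f_letter Q \<tau> l) = ldim X l"
proof -
  obtain x xs where l: "l = (x, xs)" by (cases l)
  assume "vl X l"
  then have "x \<in> sc X" "1 \<le> sdim X x" "dok (sdim X x) xs" using l unfolding vl_def by auto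
  then show ?thesis using fold_in[of x xs] l unfolding f_letter_def ldim_def by simp
qed

lemma f_word_in: "\<forall>l\<in>set w. vl X l \<Longrightarrow> f_word Q \<tau> w \<in> cc Q \<and> cdim Q (f_word Q \<tau> w) = wdim X w"
proof (induction w)
  case Nil then show ?case using unit_in by simp
next
  case (Cons l ls)
  have l: "f_letter Q \<tau> l \<in> cc Q \<and> cdim Q (f_letter Q \<tau> l) = ldim X l" using Cons.prems f_letter_in by simp
  show ?case
  proof (cases "ls = []")
    case True then show ?thesis using l by simp
  next
    case False
    then have e: "f_word Q \<tau> (l # ls) = cmult Q (f_letter Q \<tau> l) (f_word Q \<tau> ls)"
      by (cases ls) auto
    have "f_word Q \<tau> ls \<in> cc Q \<and> cdim Q (f_word Q \<tau> ls) = wdim X ls" using Cons by simp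
    then show ?thesis using e l mult_in[of "f_letter Q \<tau> l" "f_word Q \<tau> ls"] by simp
  qed
qed

end


context ctx begin

lemma f_cons: "vl X l \<Longrightarrow> \<forall>l\<in>set w. vl X l \<Longrightarrow> f_word Q \<tau> (l # w) = cmult Q (f_letter Q \<tau> l) (f_word Q \<tau> w)"
proof (cases w)
  case Nil
  assume "vl X l" then show ?thesis using Nil f_letter_in unit_r by simp
qed simp

lemma f_app: "\<forall>l\<in>set u. vl X l \<Longrightarrow> \<forall>l\<in>set v. vl X l \<Longrightarrow>
   f_word Q \<tau> (u @ v) = cmult Q (f_word Q \<tau> u) (f_word Q \<tau> v)"
proof (induction u)
  case Nil then show ?case using f_word_in unit_l by simp
next
  case (Cons a u)
  have "f_word Q \<tau> ((a # u) @ v) = cmult Q (f_letter Q \<tau> a) (f_word Q \<tau> (u @ v))"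
  proof -
    have "\<forall>l\<in>set (u @ v). vl X l" "vl X a" using Cons.prems by auto
    then show ?thesis using f_cons[of a "u @ v"] by simp
  qed
  also have "\<dots> = cmult Q (f_letter Q \<tau> a) (cmult Q (f_word Q \<tau> u) (f_word Q \<tau> v))"
    using Cons by simp
  also have "\<dots> = cmult Q (cmult Q (f_letter Q \<tau> a) (f_word Q \<tau> u)) (f_word Q \<tau> v)"
    using assoc f_letter_in f_word_in Cons.prems by simp
  also have "\<dots> = cmult Q (f_word Q \<tau> (a # u)) (f_word Q \<tau> v)"
    using Cons.prems f_cons[of a u] by simp
  finally show ?case .
qed

lemma eta: "\<forall>l\<in>set w. vl X l \<Longrightarrow> w \<noteq> [] \<Longrightarrow> 1 \<le> j \<Longrightarrow> j \<le> Suc (wdim X w) \<Longrightarrow>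
   (\<forall>l\<in>set (eta_word X j w). vl X l) \<and> eta_word X j w \<noteq> [] \<and>
   wdim X (eta_word X j w) = Suc (wdim X w) \<and>
   f_word Q \<tau> (eta_word X j w) = cdeg Q j (f_word Q \<tau> w)"
proof (induction w arbitrary: j)
  case Nil then show ?case by simp
next
  case (Cons l ls)
  obtain x xs where l: "l = (x, xs)" by (cases l)
  have x: "x \<in> sc X" "1 \<le> sdim X x" "dok (sdim X x) xs" using Cons.prems l unfolding vl_def by auto
  have fl: "f_letter Q \<tau> l \<in> cc Q" "cdim Q (f_letter Q \<tau> l) = ldim X l"
    using f_letter_in Cons.prems by auto
  have ld: "ldim X l = sdim X x - 1 + length xs" by (simp add: l ldim_def)
  have lsv: "\<forall>l\<in>set ls. vl X l" using Cons.prems by simp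
  have fls: "f_word Q \<tau> ls \<in> cc Q" "cdim Q (f_word Q \<tau> ls) = wdim X ls"
    using f_word_in lsv by auto
  have newl: "j \<le> Suc (ldim X l) \<Longrightarrow> vl X (x, ins_deg j xs) \<and> ldim X (x, ins_deg j xs) = Suc (ldim X l)
      \<and> f_letter Q \<tau> (x, ins_deg j xs) = cdeg Q j (f_letter Q \<tau> l)"
  proof -
    assume j: "j \<le> Suc (ldim X l)"
    then have "j \<le> sdim X x + length xs" using ld x by simp
    then show ?thesis using x Cons.prems(3) dok_ins[of "sdim X x" xs j] fold_ins[of x xs j] l
      unfolding vl_def ldim_def f_letter_def by simp
  qed
  show ?case
  proof (cases ls)
    case Nil
    then have "j \<le> Suc (ldim X l)" using Cons.prems by simp
    then show ?thesis using newl Nil l by simp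
  next
    case (Cons l' ls')
    show ?thesis
    proof (cases "j \<le> ldim X l")
      case True
      then have e: "eta_word X j (l # ls) = (x, ins_deg j xs) # ls" using Cons l by simp
      have nl: "vl X (x, ins_deg j xs)" "ldim X (x, ins_deg j xs) = Suc (ldim X l)"
          "f_letter Q \<tau> (x, ins_deg j xs) = cdeg Q j (f_letter Q \<tau> l)" using newl True by auto
      have "f_word Q \<tau> ((x, ins_deg j xs) # ls) = cmult Q (cdeg Q j (f_letter Q \<tau> l)) (f_word Q \<tau> ls)"
        using f_cons[OF nl(1) lsv] nl(3) by simp
      also have "\<dots> = cdeg Q j (cmult Q (f_letter Q \<tau> l) (f_word Q \<tau> ls))"
        using mult_deg_l[of "f_letter Q \<tau> l" "f_word Q \<tau> ls" j] fl fls True \<open>1 \<le> j\<close> by simp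
      also have "\<dots> = cdeg Q j (f_word Q \<tau> (l # ls))"
        using f_cons[of l ls] \<open>\<forall>l\<in>set (l # ls). vl X l\<close> by simp
      finally show ?thesis using e nl lsv by simp
    next
      case False
      then have e: "eta_word X j (l # ls) = l # eta_word X (j - ldim X l) ls" using Cons by simp
      have IH: "(\<forall>l\<in>set (eta_word X (j - ldim X l) ls). vl X l) \<and> eta_word X (j - ldim X l) ls \<noteq> [] \<and>
         wdim X (eta_word X (j - ldim X l) ls) = Suc (wdim X ls) \<and>
         f_word Q \<tau> (eta_word X (j - ldim X l) ls) = cdeg Q (j - ldim X l) (f_word Q \<tau> ls)"
        using Cons.IH[of "j - ldim X l"] lsv Cons False \<open>j \<le> Suc (wdim X (l # ls))\<close> by simp
      have "f_word Q \<tau> (l # eta_word X (j - ldim X l) ls)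
          = cmult Q (f_letter Q \<tau> l) (cdeg Q (j - ldim X l) (f_word Q \<tau> ls))"
        using f_cons[of l "eta_word X (j - ldim X l) ls"] IH Cons.prems by simp
      also have "\<dots> = cdeg Q (cdim Q (f_letter Q \<tau> l) + (j - ldim X l)) (cmult Q (f_letter Q \<tau> l) (f_word Q \<tau> ls))"
        using mult_deg_r[of "f_letter Q \<tau> l" "f_word Q \<tau> ls" "j - ldim X l"] fl fls False \<open>j \<le> Suc (wdim X (l # ls))\<close>
        by simp
      also have "\<dots> = cdeg Q j (f_word Q \<tau> (l # ls))"
        using f_cons[of l ls] Cons.prems fl False by simp
      finally show ?thesis using e IH Cons.prems by simp
    qed
  qed
qed

end


context ctx begin

lemma front_in: "x \<in> sc X \<Longrightarrow> k \<le> sdim X x \<Longrightarrow>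
   front_faces X k x \<in> sc X \<and> sdim X (front_faces X k x) = sdim X x - k"
proof (induction k arbitrary: x)
  case 0 then show ?case by (simp add: front_faces_def)
next
  case (Suc k)
  have s: "sface X k x \<in> sc X \<and> sdim X (sface X k x) = sdim X x - 1"
    using sface_in[of x k] Suc.prems by simp
  have "front_faces X (Suc k) x = front_faces X k (sface X k x)"
    by (simp add: front_faces_def)
  then show ?case using Suc.IH[of "sface X k x"] s Suc.prems by simp
qed

lemma back_in0: "x \<in> sc X \<Longrightarrow> sdim X x = m + k \<Longrightarrow>
   foldr (sface X) [Suc m..<Suc (m + k)] x \<in> sc X \<and> sdim X (foldr (sface X) [Suc m..<Suc (m + k)] x) = m"
proof (induction k arbitrary: x)
  case 0 then show ?case by simp
next
  case (Suc k)
  have s: "sface X (Suc (m + k)) x \<in> sc X \<and> sdim X (sface X (Suc (m + k)) x) = m + k"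
    using sface_in[of x "Suc (m + k)"] Suc.prems by simp
  have "[Suc m..<Suc (m + Suc k)] = [Suc m..<Suc (m + k)] @ [Suc (m + k)]" by simp
  then have "foldr (sface X) [Suc m..<Suc (m + Suc k)] x = foldr (sface X) [Suc m..<Suc (m + k)] (sface X (Suc (m + k)) x)"
    by simp
  then show ?case using Suc.IH[of "sface X (Suc (m + k)) x"] s by simp
qed

lemma back_in: "x \<in> sc X \<Longrightarrow> i \<le> sdim X x \<Longrightarrow>
   back_faces X i x \<in> sc X \<and> sdim X (back_faces X i x) = i"
  using back_in0[of x i "sdim X x - i"] unfolding back_faces_def by simp

end


context ctx begin

lemma tt_face0: "truncating_twisting X Q \<tau> \<Longrightarrow> x \<in> sc X \<Longrightarrow> 1 \<le> i \<Longrightarrow> i \<le> sdim X x - 1 \<Longrightarrow>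
   cface Q i False (\<tau> x) = cmult Q (\<tau> (back_faces X i x)) (\<tau> (front_faces X i x))"
  unfolding truncating_twisting_def by blast
lemma tt_face1: "truncating_twisting X Q \<tau> \<Longrightarrow> x \<in> sc X \<Longrightarrow> 1 \<le> i \<Longrightarrow> i \<le> sdim X x - 1 \<Longrightarrow>
   cface Q i True (\<tau> x) = \<tau> (sface X i x)"
  unfolding truncating_twisting_def by blast

lemma face_letter_ok: "truncating_twisting X Q \<tau> \<Longrightarrow> vl X (x, xs) \<Longrightarrow> 1 \<le> i \<Longrightarrow> i \<le> ldim X (x, xs) \<Longrightarrow>
   (\<forall>l\<in>set (face_letter X i e x xs). vl X l) \<and> face_letter X i e x xs \<noteq> [] \<and>
   wdim X (face_letter X i e x xs) = ldim X (x, xs) - 1 \<and>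
   f_word Q \<tau> (face_letter X i e x xs) = cface Q i e (f_letter Q \<tau> (x, xs))"
proof (induction xs arbitrary: i)
  case Nil
  have x: "x \<in> sc X" "1 \<le> sdim X x" using Nil.prems unfolding vl_def by auto
  have i: "i \<le> sdim X x - 1" using Nil.prems by (simp add: ldim_def)
  have fl: "f_letter Q \<tau> (x, []) = \<tau> x" by (simp add: f_letter_def)
  show ?case
  proof (cases e)
    case True
    have s: "sface X i x \<in> sc X \<and> sdim X (sface X i x) = sdim X x - 1"
      using sface_in[of x i] x i Nil.prems by simp
    then show ?thesis using True x i Nil.prems tt_face1[of x i] fl
      by (simp add: vl_def ldim_def f_letter_def)
  next
    case False
    have b: "back_faces X i x \<in> sc X \<and> sdim X (back_faces X i x) = i"
      using back_in[of x i] x i by simp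
    have f: "front_faces X i x \<in> sc X \<and> sdim X (front_faces X i x) = sdim X x - i"
      using front_in[of x i] x i by simp
    have ar: "1 \<le> sdim X x - i" "i - 1 + (sdim X x - i - 1) = sdim X x - 1 - 1" using i Nil.prems(3) by arith+
    show ?thesis using False x i Nil.prems tt_face0[of x i] fl b f ar
      by (simp add: vl_def ldim_def f_letter_def)
  qed
next
  case (Cons j ys)
  have x: "x \<in> sc X" "1 \<le> sdim X x" "dok (sdim X x) (j # ys)" using Cons.prems unfolding vl_def by auto
  have vys: "vl X (x, ys)" using x unfolding vl_def by simp
  have j: "1 \<le> j" "j \<le> sdim X x + length ys" using x by auto
  define a where "a = f_letter Q \<tau> (x, ys)"
  have a: "a \<in> cc Q" "cdim Q a = ldim X (x, ys)" using f_letter_in[OF vys] a_def by auto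
  have ld: "ldim X (x, j # ys) = Suc (ldim X (x, ys))" "ldim X (x, ys) = sdim X x - 1 + length ys"
    using x by (auto simp: ldim_def)
  have fj: "f_letter Q \<tau> (x, j # ys) = cdeg Q j a" by (simp add: a_def f_letter_def)
  have i: "1 \<le> i" "i \<le> Suc (ldim X (x, ys))" using Cons.prems ld by auto
  show ?case
  proof (cases "i < j")
    case True
    have IH: "(\<forall>l\<in>set (face_letter X i e x ys). vl X l) \<and> face_letter X i e x ys \<noteq> [] \<and>
      wdim X (face_letter X i e x ys) = ldim X (x, ys) - 1 \<and>
      f_word Q \<tau> (face_letter X i e x ys) = cface Q i e a"
      using Cons.IH[OF Cons.prems(1) vys i(1)] True j ld x a_def by simp
    have E: "(\<forall>l\<in>set (eta_word X (j - 1) (face_letter X i e x ys)). vl X l) \<and>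
      eta_word X (j - 1) (face_letter X i e x ys) \<noteq> [] \<and>
      wdim X (eta_word X (j - 1) (face_letter X i e x ys)) = Suc (ldim X (x, ys) - 1) \<and>
      f_word Q \<tau> (eta_word X (j - 1) (face_letter X i e x ys)) = cdeg Q (j - 1) (cface Q i e a)"
      using eta[of "face_letter X i e x ys" "j - 1"] IH True i j ld x by simp
    have "cface Q i e (cdeg Q j a) = cdeg Q (j - 1) (cface Q i e a)"
      using face_deg_lt[OF a(1) i(1) True] a j ld x by simp
    moreover have "1 \<le> ldim X (x, ys)" using True i j ld by arith
    ultimately show ?thesis using E True fj ld i by simp
  next
    case False
    show ?thesis
    proof (cases "i = j")
      case True
      have "cface Q j e (cdeg Q j a) = a" using face_deg_eq[OF a(1) j(1)] a j ld x by simp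
      then show ?thesis using True fj ld vys a_def by simp
    next
      case False2: False
      then have ij: "j < i" using False by simp
      have IH: "(\<forall>l\<in>set (face_letter X (i - 1) e x ys). vl X l) \<and> face_letter X (i - 1) e x ys \<noteq> [] \<and>
        wdim X (face_letter X (i - 1) e x ys) = ldim X (x, ys) - 1 \<and>
        f_word Q \<tau> (face_letter X (i - 1) e x ys) = cface Q (i - 1) e a"
        using Cons.IH[OF Cons.prems(1) vys, of "i - 1"] ij j i a_def by simp
      have E: "(\<forall>l\<in>set (eta_word X j (face_letter X (i - 1) e x ys)). vl X l) \<and>
        eta_word X j (face_letter X (i - 1) e x ys) \<noteq> [] \<and>
        wdim X (eta_word X j (face_letter X (i - 1) e x ys)) = Suc (ldim X (x, ys) - 1) \<and>
        f_word Q \<tau> (eta_word X j (face_letter X (i - 1) e x ys)) = cdeg Q j (cface Q (i - 1) e a)"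
        using eta[of "face_letter X (i - 1) e x ys" j] IH ij i j by simp
      have "cface Q i e (cdeg Q j a) = cdeg Q j (cface Q (i - 1) e a)"
        using face_deg_gt[OF a(1) j(1) ij] a i by simp
      moreover have "1 \<le> ldim X (x, ys)" using ij i j ld by arith
      ultimately show ?thesis using E ij fj ld i by simp
    qed
  qed
qed

end


context ctx begin

lemma face_word_ok: "truncating_twisting X Q \<tau> \<Longrightarrow> \<forall>l\<in>set w. vl X l \<Longrightarrow> 1 \<le> i \<Longrightarrow> i \<le> wdim X w \<Longrightarrow>
   (\<forall>l\<in>set (face_word X i e w). vl X l) \<and> face_word X i e w \<noteq> [] \<and>
   wdim X (face_word X i e w) = wdim X w - 1 \<and>
   f_word Q \<tau> (face_word X i e w) = cface Q i e (f_word Q \<tau> w)"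
proof (induction w arbitrary: i)
  case Nil then show ?case by simp
next
  case (Cons l ls)
  obtain x xs where l: "l = (x, xs)" by (cases l)
  have vl: "vl X (x, xs)" using Cons.prems l by simp
  have lsv: "\<forall>l\<in>set ls. vl X l" using Cons.prems by simp
  have fl: "f_letter Q \<tau> l \<in> cc Q" "cdim Q (f_letter Q \<tau> l) = ldim X l"
    using f_letter_in Cons.prems by auto
  have fls: "f_word Q \<tau> ls \<in> cc Q" "cdim Q (f_word Q \<tau> ls) = wdim X ls"
    using f_word_in lsv by auto
  have fc: "f_word Q \<tau> (l # ls) = cmult Q (f_letter Q \<tau> l) (f_word Q \<tau> ls)"
    using f_cons[of l ls] Cons.prems by simp
  show ?case
  proof (cases "i \<le> ldim X l")
    case True
    have FL: "(\<forall>l\<in>set (face_letter X i e x xs). vl X l) \<and> face_letter X i e x xs \<noteq> [] \<and>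
      wdim X (face_letter X i e x xs) = ldim X (x, xs) - 1 \<and>
      f_word Q \<tau> (face_letter X i e x xs) = cface Q i e (f_letter Q \<tau> (x, xs))"
      using face_letter_ok[OF Cons.prems(1) vl Cons.prems(3)] True l by simp
    have e: "face_word X i e (l # ls) = face_letter X i e x xs @ ls" using True l by simp
    have "f_word Q \<tau> (face_letter X i e x xs @ ls) = cmult Q (cface Q i e (f_letter Q \<tau> l)) (f_word Q \<tau> ls)"
      using f_app[of "face_letter X i e x xs" ls] FL lsv l by simp
    also have "\<dots> = cface Q i e (f_word Q \<tau> (l # ls))"
      using mult_face_l[of "f_letter Q \<tau> l" "f_word Q \<tau> ls" i e] fl fls fc True Cons.prems(3) by simp
    finally show ?thesis using e FL lsv l True Cons.prems(3) by auto
  next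
    case False
    have ne: "ls \<noteq> []" using False Cons.prems(4) by auto
    have e: "face_word X i e (l # ls) = l # face_word X (i - ldim X l) e ls" using False by simp
    have IH: "(\<forall>l\<in>set (face_word X (i - ldim X l) e ls). vl X l) \<and> face_word X (i - ldim X l) e ls \<noteq> [] \<and>
      wdim X (face_word X (i - ldim X l) e ls) = wdim X ls - 1 \<and>
      f_word Q \<tau> (face_word X (i - ldim X l) e ls) = cface Q (i - ldim X l) e (f_word Q \<tau> ls)"
      using Cons.IH[OF Cons.prems(1) lsv, of "i - ldim X l"] False Cons.prems(4) by simp
    have "f_word Q \<tau> (l # face_word X (i - ldim X l) e ls) = cmult Q (f_letter Q \<tau> l) (cface Q (i - ldim X l) e (f_word Q \<tau> ls))"
      using f_cons[of l "face_word X (i - ldim X l) e ls"] IH Cons.prems by simp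
    also have "\<dots> = cface Q (cdim Q (f_letter Q \<tau> l) + (i - ldim X l)) e (cmult Q (f_letter Q \<tau> l) (f_word Q \<tau> ls))"
      using mult_face_r[of "f_letter Q \<tau> l" "f_word Q \<tau> ls" "i - ldim X l" e] fl fls False Cons.prems(4) by simp
    also have "\<dots> = cface Q i e (f_word Q \<tau> (l # ls))" using fc fl False by simp
    finally show ?thesis using e IH Cons.prems False by auto
  qed
qed

lemma base_in: "one_reduced X \<Longrightarrow> base_pt X \<in> sc X \<and> sdim X (base_pt X) = 0"
proof -
  assume "one_reduced X"
  then obtain a where a: "{x\<in>sc X. sdim X x = 0} = {a}" unfolding one_reduced_def by blast
  then have "base_pt X = a" unfolding base_pt_def by (rule_tac the_equality) auto
  then show ?thesis using a by auto
qed

lemma unit_letter: "one_reduced X \<Longrightarrow> sdeg X 0 (base_pt X) \<in> sc X \<and> sdim X (sdeg X 0 (base_pt X)) = 1"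
  using base_in sdeg_in[of "base_pt X" 0] by simp

lemma unit_vl: "one_reduced X \<Longrightarrow> vl X (sdeg X 0 (base_pt X), [])"
  using unit_letter unfolding vl_def by simp

lemma unit_f: "one_reduced X \<Longrightarrow> truncating_twisting X Q \<tau> \<Longrightarrow> f_word Q \<tau> (omega_unit X) = cunit Q"
  using unit_letter unfolding truncating_twisting_def omega_unit_def by (simp add: f_letter_def)

lemma unit_wdim: "one_reduced X \<Longrightarrow> wdim X (omega_unit X) = 0"
  using unit_letter unfolding omega_unit_def by (simp add: ldim_def)

lemma rel_ok: assumes OR: "one_reduced X" and TT: "truncating_twisting X Q \<tau>" shows "omega_rel X w v \<Longrightarrow>
  (w \<noteq> [] \<and> (\<forall>l\<in>set w. vl X l)) \<and> (v \<noteq> [] \<and> (\<forall>l\<in>set v. vl X l)) \<and> wdim X w = wdim X v \<and>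
  f_word Q \<tau> w = f_word Q \<tau> v"
proof (induction rule: omega_rel.induct)
  case (om_refl w) then show ?case unfolding valid_word_def by (auto intro: valid_vl)
next
  case (om_sym w v) then show ?case by simp
next
  case (om_trans u v w) then show ?case by simp
next
  case (om_shift x y)
  have tx: "\<tau> x \<in> cc Q" "cdim Q (\<tau> x) = sdim X x - 1" using TY om_shift by auto
  have ty: "\<tau> y \<in> cc Q" "cdim Q (\<tau> y) = sdim X y - 1" using TY om_shift by auto
  have "cdeg Q (sdim X x) (cmult Q (\<tau> x) (\<tau> y)) = cmult Q (cdeg Q (sdim X x) (\<tau> x)) (\<tau> y)"
    using mult_deg_l[of "\<tau> x" "\<tau> y" "sdim X x"] tx ty om_shift by simp
  moreover have "cdeg Q (cdim Q (\<tau> x) + 1) (cmult Q (\<tau> x) (\<tau> y)) = cmult Q (\<tau> x) (cdeg Q 1 (\<tau> y))"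
    using mult_deg_r[of "\<tau> x" "\<tau> y" 1] tx ty om_shift by simp
  ultimately show ?case using om_shift tx
    by (simp add: vl_def ldim_def f_letter_def)
next
  case (om_unit_l w)
  have vw: "w \<noteq> []" "\<forall>l\<in>set w. vl X l" using om_unit_l unfolding valid_word_def by (auto intro: valid_vl)
  have "f_word Q \<tau> (omega_unit X @ w) = cmult Q (f_word Q \<tau> (omega_unit X)) (f_word Q \<tau> w)"
    using f_app[of "omega_unit X" w] unit_vl[OF OR] om_unit_l vw unfolding omega_unit_def by simp
  then show ?case using unit_f[OF OR TT] unit_l f_word_in vw unit_vl[OF OR] unit_wdim[OF OR] om_unit_l
    unfolding omega_unit_def by simp
next
  case (om_unit_r w)
  have vw: "w \<noteq> []" "\<forall>l\<in>set w. vl X l" using om_unit_r unfolding valid_word_def by (auto intro: valid_vl)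
  have "f_word Q \<tau> (w @ omega_unit X) = cmult Q (f_word Q \<tau> w) (f_word Q \<tau> (omega_unit X))"
    using f_app[of w "omega_unit X"] unit_vl[OF OR] om_unit_r vw unfolding omega_unit_def by simp
  then show ?case using unit_f[OF OR TT] unit_r f_word_in vw unit_vl[OF OR] unit_wdim[OF OR] om_unit_r
    unfolding omega_unit_def by simp
next
  case (om_top_deg x)
  have s: "sdeg X (sdim X x) x \<in> sc X \<and> sdim X (sdeg X (sdim X x) x) = sdim X x + 1"
    using sdeg_in[of x "sdim X x"] om_top_deg by simp
  have "cdeg Q (sdim X x) (\<tau> x) = \<tau> (sdeg X (sdim X x) x)"
    using om_top_deg TT unfolding truncating_twisting_def by blast
  then show ?case using s om_top_deg by (simp add: vl_def ldim_def f_letter_def)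
next
  case (om_mult w v u u')
  have vu: "\<forall>l\<in>set u. vl X l" "\<forall>l\<in>set u'. vl X l" using om_mult by (auto intro: valid_vl)
  have hw: "\<forall>l\<in>set w. vl X l" "\<forall>l\<in>set v. vl X l" using om_mult by auto
  have "f_word Q \<tau> (u @ w @ u') = cmult Q (f_word Q \<tau> u) (cmult Q (f_word Q \<tau> w) (f_word Q \<tau> u'))"
    using f_app[of u "w @ u'"] f_app[of w u'] vu hw by auto
  moreover have "f_word Q \<tau> (u @ v @ u') = cmult Q (f_word Q \<tau> u) (cmult Q (f_word Q \<tau> v) (f_word Q \<tau> u'))"
    using f_app[of u "v @ u'"] f_app[of v u'] vu hw by auto
  ultimately show ?case using om_mult vu by auto
next
  case (om_face w v i e)
  then show ?case using face_word_ok[OF TT, of w i e] face_word_ok[OF TT, of v i e] by simp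
next
  case (om_deg w v j)
  then show ?case using eta[of w j] eta[of v j] by simp
qed

end

theorem mainTheorem1:
  fixes X :: "'x sset" and Q :: "'q mcset" and \<tau> :: "'x \<Rightarrow> 'q"
  assumes "simplicial_set X" and "one_reduced X"
    and "monoidal_cubical_set Q"
    and "\<forall>x\<in>sc X. 1 \<le> sdim X x \<longrightarrow> \<tau> x \<in> cc Q \<and> cdim Q (\<tau> x) = sdim X x - 1"
  shows "truncating_twisting X Q \<tau> \<longleftrightarrow> omega_map_is_cubical X Q \<tau>"
proof -
  interpret ctx X Q \<tau> using assms by (unfold_locales) auto
  show ?thesis
  proof
    assume TT: "truncating_twisting X Q \<tau>"
    show "omega_map_is_cubical X Q \<tau>"
      unfolding omega_map_is_cubical_def
    proof (intro conjI allI impI)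
      fix w v assume "omega_rel X w v"
      then show "f_word Q \<tau> w = f_word Q \<tau> v" using rel_ok[OF assms(2) TT] by blast
    next
      show "f_word Q \<tau> (omega_unit X) = cunit Q" using unit_f[OF assms(2) TT] .
    next
      fix w i e assume "valid_word X w" "1 \<le> i \<and> i \<le> wdim X w"
      then show "f_word Q \<tau> (face_word X i e w) = cface Q i e (f_word Q \<tau> w)"
        using face_word_ok[OF TT, of w i e] valid_vl unfolding valid_word_def by blast
    next
      fix w j assume "valid_word X w" "1 \<le> j \<and> j \<le> Suc (wdim X w)"
      then show "f_word Q \<tau> (eta_word X j w) = cdeg Q j (f_word Q \<tau> w)"
        using eta[of w j] valid_vl unfolding valid_word_def by blast
    qed
  next
    assume C: "omega_map_is_cubical X Q \<tau>"
    have rel: "\<And>w v. omega_rel X w v \<Longrightarrow> f_word Q \<tau> w = f_word Q \<tau> v"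
      using C unfolding omega_map_is_cubical_def by blast
    have face: "\<And>w i e. valid_word X w \<Longrightarrow> 1 \<le> i \<Longrightarrow> i \<le> wdim X w \<Longrightarrow>
        f_word Q \<tau> (face_word X i e w) = cface Q i e (f_word Q \<tau> w)"
      using C unfolding omega_map_is_cubical_def by blast
    have deg: "\<And>w j. valid_word X w \<Longrightarrow> 1 \<le> j \<Longrightarrow> j \<le> Suc (wdim X w) \<Longrightarrow>
        f_word Q \<tau> (eta_word X j w) = cdeg Q j (f_word Q \<tau> w)"
      using C unfolding omega_map_is_cubical_def by blast
    have vw1: "valid_word X [(x, [])]" if "x \<in> sc X" "1 \<le> sdim X x" for x
      using that unfolding valid_word_def valid_letter_def by (simp add: normal_degs.nd_nil)
    have wd1: "wdim X [(x, [])] = sdim X x - 1" for x by (simp add: ldim_def)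
    have fw1: "f_word Q \<tau> [(x, [])] = \<tau> x" for x by (simp add: f_letter_def)
    show "truncating_twisting X Q \<tau>"
      unfolding truncating_twisting_def
    proof (intro conjI ballI allI impI)
      fix x assume x: "x \<in> sc X" "sdim X x = 1"
      obtain b where b: "{x\<in>sc X. sdim X x = 1} = {b}" using assms(2) unfolding one_reduced_def by blast
      have "x \<in> {b}" using b x by blast
      moreover have "sdeg X 0 (base_pt X) \<in> {b}" using b unit_letter[OF assms(2)] by blast
      ultimately have "x = sdeg X 0 (base_pt X)" by simp
      moreover have "f_word Q \<tau> (omega_unit X) = cunit Q" using C unfolding omega_map_is_cubical_def by blast
      ultimately show "\<tau> x = cunit Q" unfolding omega_unit_def by (simp add: f_letter_def)
    next
      fix x i assume x: "x \<in> sc X" and i: "1 \<le> i \<and> i \<le> sdim X x - 1"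
      have "f_word Q \<tau> (face_word X i False [(x, [])]) = cface Q i False (f_word Q \<tau> [(x, [])])"
      proof -
        have n: "1 \<le> sdim X x" using i by arith
        have i2: "1 \<le> i" "i \<le> wdim X [(x, [])]" using i wd1 by auto
        show ?thesis using face[OF vw1[OF x n] i2] .
      qed
      then show "cface Q i False (\<tau> x) = cmult Q (\<tau> (back_faces X i x)) (\<tau> (front_faces X i x))"
        using i by (simp add: f_letter_def ldim_def)
    next
      fix x i assume x: "x \<in> sc X" and i: "1 \<le> i \<and> i \<le> sdim X x - 1"
      have "f_word Q \<tau> (face_word X i True [(x, [])]) = cface Q i True (f_word Q \<tau> [(x, [])])"
      proof -
        have n: "1 \<le> sdim X x" using i by arith
        have i2: "1 \<le> i" "i \<le> wdim X [(x, [])]" using i wd1 by auto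
        show ?thesis using face[OF vw1[OF x n] i2] .
      qed
      then show "cface Q i True (\<tau> x) = \<tau> (sface X i x)"
        using i by (simp add: f_letter_def ldim_def)
    next
      fix x assume x: "x \<in> sc X" and n: "1 \<le> sdim X x"
      have "f_word Q \<tau> (eta_word X (sdim X x) [(x, [])]) = cdeg Q (sdim X x) (f_word Q \<tau> [(x, [])])"
      proof -
        have j2: "1 \<le> sdim X x" "sdim X x \<le> Suc (wdim X [(x, [])])" using n wd1 by auto
        show ?thesis using deg[OF vw1[OF x n] j2] .
      qed
      then have "f_word Q \<tau> [(x, [sdim X x])] = cdeg Q (sdim X x) (\<tau> x)" by (simp add: f_letter_def)
      moreover have "f_word Q \<tau> [(x, [sdim X x])] = f_word Q \<tau> [(sdeg X (sdim X x) x, [])]"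
        using rel[OF omega_rel.om_top_deg[OF x n]] .
      ultimately show "cdeg Q (sdim X x) (\<tau> x) = \<tau> (sdeg X (sdim X x) x)" by (simp add: f_letter_def)
    qed
  qed
qed


end
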